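(* For every graph $G$, $1\le \operatorname{zir}(G)\le \operatorname{Z}(G)\le \overline{\operatorname{Z}}(G)\le \operatorname{ZIR}(G)$.
   Context: Graphs are simple, finite, undirected, with nonempty vertex set. Zero forcing: a blue vertex $u$ changes a white vertex $w$ to blue if $w$ is the only white neighbor of $u$; $B$ is a zero forcing set if starting from blue set $B$ eventually all vertices are blue. $\operatorname{Z}(G)$ is the minimum cardinality of a zero forcing set; $\overline{\operatorname{Z}}(G)$ is the maximum cardinality of a minimal (under inclusion) zero forcing set. A nonempty $F\subseteq V(G)$ is a fort if every $v\notin F$ satisfies $|N(v)\cap F|\ne1$. For $S\subseteq V(G)$, $x\in S$, a private fort of $x$ relative to $S$ is a fort $F$ with $S\cap F=\{x\}$. $S$ is a ZIr-set if every element of $S$ has a private fort relative to $S$. $\operatorname{zir}(G)$ (resp. $\operatorname{ZIR}(G)$) is the minimum (resp. maximum) cardinality of a maximal (under inclusion) ZIr-set of $G$. *)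

theory Defs
  imports Main
begin

definition graph :: "'a set \<Rightarrow> ('a \<Rightarrow> 'a \<Rightarrow> bool) \<Rightarrow> bool" where
  "graph V E \<longleftrightarrow> finite V \<and> V \<noteq> {} \<and>
     (\<forall>u v. E u v \<longrightarrow> u \<in> V \<and> v \<in> V) \<and>
     (\<forall>u v. E u v \<longrightarrow> E v u) \<and> (\<forall>v. \<not> E v v)"

definition nbhd :: "'a set \<Rightarrow> ('a \<Rightarrow> 'a \<Rightarrow> bool) \<Rightarrow> 'a \<Rightarrow> 'a set" where
  "nbhd V E v = {u \<in> V. E v u}"

text \<open>Vertices that become blue by repeatedly applying the colour change rule
starting from the blue set B (the colour change rule is monotone, so the final
coloring is the least closed set).\<close>
inductive_set zf_closure :: "'a set \<Rightarrow> ('a \<Rightarrow> 'a \<Rightarrow> bool) \<Rightarrow> 'a set \<Rightarrow> 'a set"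
  for V E B where
  init: "x \<in> B \<Longrightarrow> x \<in> V \<Longrightarrow> x \<in> zf_closure V E B"
| force: "u \<in> zf_closure V E B \<Longrightarrow> w \<in> nbhd V E u \<Longrightarrow>
          (\<forall>w'\<in>nbhd V E u - {w}. w' \<in> zf_closure V E B) \<Longrightarrow> w \<in> zf_closure V E B"

definition zero_forcing_set :: "'a set \<Rightarrow> ('a \<Rightarrow> 'a \<Rightarrow> bool) \<Rightarrow> 'a set \<Rightarrow> bool" where
  "zero_forcing_set V E B \<longleftrightarrow> B \<subseteq> V \<and> zf_closure V E B = V"

definition minimal_zfs :: "'a set \<Rightarrow> ('a \<Rightarrow> 'a \<Rightarrow> bool) \<Rightarrow> 'a set \<Rightarrow> bool" where
  "minimal_zfs V E B \<longleftrightarrow> zero_forcing_set V E B \<and>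
     (\<forall>B'. B' \<subset> B \<longrightarrow> \<not> zero_forcing_set V E B')"

definition Z :: "'a set \<Rightarrow> ('a \<Rightarrow> 'a \<Rightarrow> bool) \<Rightarrow> nat" where
  "Z V E = Min (card ` {B. zero_forcing_set V E B})"

definition Zbar :: "'a set \<Rightarrow> ('a \<Rightarrow> 'a \<Rightarrow> bool) \<Rightarrow> nat" where
  "Zbar V E = Max (card ` {B. minimal_zfs V E B})"

definition fort :: "'a set \<Rightarrow> ('a \<Rightarrow> 'a \<Rightarrow> bool) \<Rightarrow> 'a set \<Rightarrow> bool" where
  "fort V E F \<longleftrightarrow> F \<noteq> {} \<and> F \<subseteq> V \<and>
     (\<forall>v \<in> V - F. card (nbhd V E v \<inter> F) \<noteq> 1)"

definition private_fort :: "'a set \<Rightarrow> ('a \<Rightarrow> 'a \<Rightarrow> bool) \<Rightarrow> 'a set \<Rightarrow> 'a \<Rightarrow> 'a set \<Rightarrow> bool" where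
  "private_fort V E S x F \<longleftrightarrow> fort V E F \<and> S \<inter> F = {x}"

definition ZIr_set :: "'a set \<Rightarrow> ('a \<Rightarrow> 'a \<Rightarrow> bool) \<Rightarrow> 'a set \<Rightarrow> bool" where
  "ZIr_set V E S \<longleftrightarrow> S \<subseteq> V \<and> (\<forall>x \<in> S. \<exists>F. private_fort V E S x F)"

definition maximal_ZIr_set :: "'a set \<Rightarrow> ('a \<Rightarrow> 'a \<Rightarrow> bool) \<Rightarrow> 'a set \<Rightarrow> bool" where
  "maximal_ZIr_set V E S \<longleftrightarrow> ZIr_set V E S \<and>
     (\<forall>S'. S \<subset> S' \<longrightarrow> \<not> ZIr_set V E S')"

definition zir :: "'a set \<Rightarrow> ('a \<Rightarrow> 'a \<Rightarrow> bool) \<Rightarrow> nat" where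
  "zir V E = Min (card ` {S. maximal_ZIr_set V E S})"

definition ZIR :: "'a set \<Rightarrow> ('a \<Rightarrow> 'a \<Rightarrow> bool) \<Rightarrow> nat" where
  "ZIR V E = Max (card ` {S. maximal_ZIr_set V E S})"

end

theory Submission
  imports Defs
begin

lemma closure_sub1: "x \<in> zf_closure V E B \<Longrightarrow> x \<in> V"
proof (induct rule: zf_closure.induct)
  case (init x) show ?case by (fact init(2))
next
  case (force u w) show ?case using force(3) unfolding nbhd_def by blast
qed

lemma closure_sub: "zf_closure V E B \<subseteq> V"
  by (rule subsetI, rule closure_sub1)

lemma zfs_meets_fort:
  assumes "zero_forcing_set V E B" "fort V E F"
  shows "B \<inter> F \<noteq> {}"
proof
  assume d: "B \<inter> F = {}"
  have "x \<in> V - F" if "x \<in> zf_closure V E B" for x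
    using that
  proof (induct rule: zf_closure.induct)
    case (init x) then show ?case using d by blast
  next
    case (force u w)
    have wV: "w \<in> V" using force(3) unfolding nbhd_def by blast
    show ?case
    proof (rule ccontr)
      assume "w \<notin> V - F"
      with wV have wF: "w \<in> F" by auto
      have "nbhd V E u \<inter> F = {w}" using force(3,4) wF by blast
      then have "card (nbhd V E u \<inter> F) = 1" by simp
      moreover have "u \<in> V - F" by (fact force(2))
      ultimately show False using assms(2) unfolding fort_def by blast
    qed
  qed
  then have "V \<subseteq> V - F" using assms(1) unfolding zero_forcing_set_def by blast
  moreover have "F \<noteq> {}" "F \<subseteq> V" using assms(2) unfolding fort_def by blast+
  ultimately show False by blast
qed

lemma not_zfs_fort:
  assumes "B \<subseteq> V" "\<not> zero_forcing_set V E B"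
  shows "\<exists>F. fort V E F \<and> B \<inter> F = {}"
proof -
  let ?C = "zf_closure V E B"
  have ne: "?C \<noteq> V" using assms unfolding zero_forcing_set_def by auto
  have BC: "B \<subseteq> ?C" using assms(1) by (auto intro: zf_closure.init)
  have "fort V E (V - ?C)"
    unfolding fort_def
  proof (intro conjI ballI)
    show "V - ?C \<noteq> {}" using ne closure_sub[of V E B] by auto
    show "V - ?C \<subseteq> V" by auto
  next
    fix v assume v: "v \<in> V - (V - ?C)"
    show "card (nbhd V E v \<inter> (V - ?C)) \<noteq> 1"
    proof
      assume "card (nbhd V E v \<inter> (V - ?C)) = 1"
      then obtain w where w: "nbhd V E v \<inter> (V - ?C) = {w}" by (auto simp: card_Suc_eq)
      have vC: "v \<in> ?C" using v by auto
      have "w \<in> nbhd V E v" using w by auto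
      moreover have "\<forall>w'\<in>nbhd V E v - {w}. w' \<in> ?C" using w by (auto simp: nbhd_def)
      ultimately have "w \<in> ?C" by (rule zf_closure.force[OF vC])
      then show False using w by auto
    qed
  qed
  then show ?thesis using BC by blast
qed

lemma minimal_ZIr:
  assumes "minimal_zfs V E B"
  shows "maximal_ZIr_set V E B"
proof -
  have zB: "zero_forcing_set V E B" using assms unfolding minimal_zfs_def by auto
  have BV: "B \<subseteq> V" using zB unfolding zero_forcing_set_def by auto
  have zir: "ZIr_set V E B"
    unfolding ZIr_set_def
  proof (intro conjI ballI BV)
    fix x assume x: "x \<in> B"
    have "B - {x} \<subset> B" using x by auto
    then have "\<not> zero_forcing_set V E (B - {x})" using assms unfolding minimal_zfs_def by auto
    then obtain F where F: "fort V E F" "(B - {x}) \<inter> F = {}"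
      using not_zfs_fort[of "B - {x}" V E] BV by auto
    have "B \<inter> F \<noteq> {}" using zfs_meets_fort[OF zB F(1)] .
    then have "B \<inter> F = {x}" using F(2) by auto
    then show "\<exists>F. private_fort V E B x F" using F(1) unfolding private_fort_def by auto
  qed
  have "\<not> ZIr_set V E S'" if "B \<subset> S'" for S'
  proof
    assume "ZIr_set V E S'"
    obtain y where y: "y \<in> S'" "y \<notin> B" using \<open>B \<subset> S'\<close> by blast
    then obtain F where F: "fort V E F" "S' \<inter> F = {y}"
      using \<open>ZIr_set V E S'\<close> unfolding ZIr_set_def private_fort_def by auto
    have "B \<inter> F = {}" using F(2) \<open>B \<subset> S'\<close> y by auto
    then show False using zfs_meets_fort[OF zB F(1)] by simp
  qed
  then show ?thesis using zir unfolding maximal_ZIr_set_def by auto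
qed

theorem corollary2p3:
  fixes V :: "'a set" and E :: "'a \<Rightarrow> 'a \<Rightarrow> bool"
  assumes "graph V E"
  shows "1 \<le> zir V E \<and> zir V E \<le> Z V E \<and> Z V E \<le> Zbar V E \<and> Zbar V E \<le> ZIR V E"
proof -
  have fin: "finite V" and Vne: "V \<noteq> {}" using assms unfolding graph_def by auto
  have finP: "finite (Pow V)" using fin by simp
  have zV: "zero_forcing_set V E V"
    unfolding zero_forcing_set_def using closure_sub[of V E V] by (auto intro: zf_closure.init)
  let ?Z = "{B. zero_forcing_set V E B}"
  let ?M = "{B. minimal_zfs V E B}"
  let ?S = "{S. maximal_ZIr_set V E S}"
  have finZ: "finite ?Z"
    by (rule finite_subset[OF _ finP]) (auto simp: zero_forcing_set_def)
  have finM: "finite ?M"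
    by (rule finite_subset[OF _ finP]) (auto simp: minimal_zfs_def zero_forcing_set_def)
  have finS: "finite ?S"
    by (rule finite_subset[OF _ finP]) (auto simp: maximal_ZIr_set_def ZIr_set_def)
  have "Z V E \<in> card ` ?Z" unfolding Z_def
    using finZ zV by (intro Min_in) auto
  then obtain B0 where B0: "zero_forcing_set V E B0" "card B0 = Z V E" by auto
  have B0fin: "finite B0" using B0(1) fin unfolding zero_forcing_set_def by (auto intro: finite_subset)
  have B0min: "minimal_zfs V E B0"
    unfolding minimal_zfs_def
  proof (intro conjI allI impI B0(1) notI)
    fix B' assume "B' \<subset> B0" "zero_forcing_set V E B'"
    then have "card B' < card B0" using B0fin by (simp add: psubset_card_mono)
    moreover have "Z V E \<le> card B'" unfolding Z_def using finZ \<open>zero_forcing_set V E B'\<close>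
      by (intro Min_le) auto
    ultimately show False using B0(2) by simp
  qed
  have ZZb: "Z V E \<le> Zbar V E" unfolding Zbar_def using finM B0min B0(2)
    by (metis (mono_tags, lifting) Max_ge finite_imageI image_eqI mem_Collect_eq)
  have "Zbar V E \<in> card ` ?M" unfolding Zbar_def
    using finM B0min by (intro Max_in) auto
  then obtain B1 where B1: "minimal_zfs V E B1" "card B1 = Zbar V E" by auto
  have ZbZ: "Zbar V E \<le> ZIR V E" unfolding ZIR_def using finS minimal_ZIr[OF B1(1)] B1(2)
    by (metis (mono_tags, lifting) Max_ge finite_imageI image_eqI mem_Collect_eq)
  have zZ: "zir V E \<le> Z V E" unfolding zir_def using finS minimal_ZIr[OF B0min] B0(2)
    by (metis (mono_tags, lifting) Min_le finite_imageI image_eqI mem_Collect_eq)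
  have "zir V E \<in> card ` ?S" unfolding zir_def
    using finS minimal_ZIr[OF B0min] by (intro Min_in) auto
  then obtain S where S: "maximal_ZIr_set V E S" "card S = zir V E" by auto
  have SV: "S \<subseteq> V" using S(1) unfolding maximal_ZIr_set_def ZIr_set_def by auto
  have "S \<noteq> {}"
  proof
    assume "S = {}"
    obtain v where v: "v \<in> V" using Vne by auto
    have "fort V E V" unfolding fort_def using Vne by auto
    then have "ZIr_set V E {v}" unfolding ZIr_set_def private_fort_def using v by auto
    then show False using S(1) \<open>S = {}\<close> unfolding maximal_ZIr_set_def by auto
  qed
  then have "1 \<le> card S" using SV fin by (metis One_nat_def Suc_leI card_gt_0_iff finite_subset)
  then show ?thesis using S(2) zZ ZZb ZbZ by auto
qed

end
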